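(* Let $\xi>0$, $\alpha>0$, and consider, for $\sigma\ge0$, $\rho\ge0$, $y\in\mathbb{R}$, the system \[ \begin{aligned} \dot\sigma&=\sigma(-2+\rho\sigma+\rho^2)\left(y-\tfrac{\alpha}{\xi}\right)\bigl(1+O(\rho)\bigr),\\ \dot y&=\sigma+y\rho\sigma\left(y-\tfrac{\alpha}{\xi}\right)\bigl(1+O(\rho)\bigr),\\ \dot\rho&=\rho(2-\rho\sigma)\left(y-\tfrac{\alpha}{\xi}\right)\bigl(1+O(\rho)\bigr), \end{aligned} \] where the $O(\rho)$ terms are smooth functions vanishing at $\rho=0$. Then the planes $\{\rho=0\}$ and $\{\sigma=0\}$ are invariant and their intersection $\{\rho=\sigma=0\}$ is a line of fixed points. Moreover: (i) the origin $(\sigma,y,\rho)=(0,0,0)$ has the strong stable manifold $W^s(0,0,0)=\{\sigma=0,\ y=0,\ \rho\ge0\}$; (ii) there is a heteroclinic connection $\gamma^{2,4}=\{\sigma=\tfrac{2\alpha}{\xi}y-y^2,\ y\in(0,2\alpha/\xi),\ \rho=0\}$ joining $(0,0,0)$ backwards in time with $(\sigma,y,\rho)=(0,2\alpha/\xi,0)$ forward in time; (iii) the point $(0,2\alpha/\xi,0)$ has the strong unstable manifold $W^u(0,2\alpha/\xi,0)=\{\sigma=0,\ y=2\alpha/\xi,\ \rho\ge0\}$.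
   Context: This system is the flow on the attracting center manifold $x=-1-\alpha+O(r+q)$ of the system $\dot r=r^2q(y+\frac{x+1}{\xi})$, $\dot x=-(x+1+\alpha)+xrq(y+\frac{x+1}{\xi})$, $\dot y=r+yrq(y+\frac{x+1}{\xi})$, $\dot q=q^2(2-r)(y+\frac{x+1}{\xi})$, written in the blow-up coordinates $r=\rho\sigma$, $q=\rho$ and divided by $\rho$; the plane $\rho=0$ corresponds to the blown-up line $L_0=\{r=q=0,\ x=-1-\alpha\}$. *)

theory Defs
  imports "HOL-Analysis.Analysis"
begin

primrec Ck :: "nat \<Rightarrow> ('a::real_normed_vector \<Rightarrow> real) \<Rightarrow> bool" where
  "Ck 0 f = continuous_on UNIV f"
| "Ck (Suc k) f = (\<exists>f'. (\<forall>x. (f has_derivative f' x) (at x)) \<and> (\<forall>v. Ck k (\<lambda>x. f' x v)))"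

definition smooth_fun :: "('a::real_normed_vector \<Rightarrow> real) \<Rightarrow> bool" where
  "smooth_fun f \<longleftrightarrow> (\<forall>k. Ck k f)"

text \<open>The vector field in coordinates (sigma, y, rho); h1,h2,h3 are the O(rho) terms.\<close>
definition vf :: "real \<Rightarrow> real \<Rightarrow> (real \<times> real \<times> real \<Rightarrow> real) \<Rightarrow> (real \<times> real \<times> real \<Rightarrow> real)
    \<Rightarrow> (real \<times> real \<times> real \<Rightarrow> real) \<Rightarrow> real \<times> real \<times> real \<Rightarrow> real \<times> real \<times> real" where
  "vf \<xi> \<alpha> h1 h2 h3 = (\<lambda>(s, y, r).
     ( s * (-2 + r * s + r^2) * (y - \<alpha> / \<xi>) * (1 + h1 (s, y, r)),
       s + y * r * s * (y - \<alpha> / \<xi>) * (1 + h2 (s, y, r)),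
       r * (2 - r * s) * (y - \<alpha> / \<xi>) * (1 + h3 (s, y, r)) ))"

definition Quad :: "(real \<times> real \<times> real) set" where
  "Quad = {(s, y, r). s \<ge> 0 \<and> r \<ge> 0}"

definition is_sol :: "('a::real_normed_vector \<Rightarrow> 'a) \<Rightarrow> (real \<Rightarrow> 'a) \<Rightarrow> real set \<Rightarrow> bool" where
  "is_sol f x I \<longleftrightarrow> is_interval I \<and> (\<forall>t\<in>I. (x has_vector_derivative f (x t)) (at t within I))"

definition invariant_in :: "('a::real_normed_vector \<Rightarrow> 'a) \<Rightarrow> 'a set \<Rightarrow> 'a set \<Rightarrow> bool" where
  "invariant_in f D S \<longleftrightarrow> (\<forall>x I t0 t. is_sol f x I \<and> x ` I \<subseteq> D \<and> t0 \<in> I \<and> t \<in> I \<and> x t0 \<in> S \<longrightarrow> x t \<in> S)"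

definition stable_set :: "('a::real_normed_vector \<Rightarrow> 'a) \<Rightarrow> 'a set \<Rightarrow> 'a \<Rightarrow> 'a set" where
  "stable_set f U p = {z \<in> U. \<exists>x. is_sol f x {0..} \<and> x 0 = z \<and> (\<forall>t\<ge>0. x t \<in> U) \<and> (x \<longlongrightarrow> p) at_top}"

definition unstable_set :: "('a::real_normed_vector \<Rightarrow> 'a) \<Rightarrow> 'a set \<Rightarrow> 'a \<Rightarrow> 'a set" where
  "unstable_set f U p = {z \<in> U. \<exists>x. is_sol f x {..0} \<and> x 0 = z \<and> (\<forall>t\<le>0. x t \<in> U) \<and> (x \<longlongrightarrow> p) at_bot}"

end

theory Submission
  imports Defs "HOL-Real_Asymp.Real_Asymp"
begin


lemma scalar_ode:
  fixes g :: "real \<Rightarrow> real" and c r0 :: real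
  assumes c: "c > 0" and r0: "r0 > 0"
    and gc: "continuous_on {0<..r0} g"
    and gb: "\<And>\<rho>. 0 < \<rho> \<Longrightarrow> \<rho> \<le> r0 \<Longrightarrow> 1/2 \<le> g \<rho> \<and> g \<rho> \<le> 3/2"
  shows "\<exists>\<rho>. \<rho> 0 = r0 \<and> (\<forall>t\<ge>0. 0 < \<rho> t \<and> \<rho> t \<le> r0 \<and>
            (\<rho> has_real_derivative (- c * \<rho> t * g (\<rho> t))) (at t)) \<and> (\<rho> \<longlongrightarrow> 0) at_top"
proof -
  define u0 where "u0 = ln r0"
  define \<phi> where "\<phi> v = 1 / (c * g (exp (min v u0)))" for v
  have ex: "0 < exp (min v u0) \<and> exp (min v u0) \<le> r0" for v
    using r0 exp_le_cancel_iff[of "min v u0" u0] by (simp add: u0_def)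
  have \<phi>b: "2/(3*c) \<le> \<phi> v \<and> \<phi> v \<le> 2/c" for v
  proof -
    from gb[of "exp (min v u0)"] ex[of v] have g: "1/2 \<le> g (exp (min v u0))" "g (exp (min v u0)) \<le> 3/2" by auto
    have "2/(3*c) \<le> 1 / (c * g (exp (min v u0)))"
      using g c by (simp add: field_simps)
    moreover have "1 / (c * g (exp (min v u0))) \<le> 2/c"
      using g c by (simp add: field_simps)
    ultimately show ?thesis by (simp add: \<phi>_def)
  qed
  have \<phi>pos: "\<phi> v > 0" for v proof -
    have "0 < 2/(3*c)" using c by simp
    then show ?thesis using \<phi>b[of v] by linarith
  qed
  have \<phi>c: "continuous_on UNIV \<phi>"
  proof -
    have c1: "continuous_on UNIV (\<lambda>v. exp (min v u0))"
      by (intro continuous_intros)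
    have c2: "continuous_on UNIV (\<lambda>v. g (exp (min v u0)))"
    proof -
      have "continuous_on (range (\<lambda>v. exp (min v u0))) g"
        by (rule continuous_on_subset[OF gc]) (use ex in auto)
      from continuous_on_compose[OF c1 this] show ?thesis by (simp add: o_def)
    qed
    have nz: "c * g (exp (min v u0)) \<noteq> 0" for v
      using gb[of "exp (min v u0)"] ex[of v] c by auto
    show ?thesis unfolding \<phi>_def
      by (rule continuous_on_divide[OF continuous_on_const continuous_on_mult[OF continuous_on_const c2]])
        (use nz in auto)
  qed
  have \<phi>ci: "continuous_on S \<phi>" for S using \<phi>c continuous_on_subset by blast
  have \<phi>int: "\<phi> integrable_on {a..b}" for a b
    by (rule integrable_continuous_real[OF \<phi>ci])
  define B where "B = u0 + 1"
  define K where "K u = integral {u..B} \<phi>" for u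
  have Kd: "(K has_real_derivative - \<phi> u) (at u)" if "u < B" for u
  proof -
    have "(K has_real_derivative - \<phi> u) (at u within {u-1..B})"
      unfolding K_def using that by (intro integral_has_real_derivative' \<phi>ci) auto
    moreover have "at u within {u-1..B} = at u" using that by (intro at_within_Icc_at) auto
    ultimately show ?thesis by simp
  qed
  have Kcont: "continuous_on {a..B} K" for a
  proof -
    have "\<And>x. x \<in> {a..B} \<Longrightarrow> (K has_real_derivative - \<phi> x) (at x within {a..B})"
      unfolding K_def by (intro integral_has_real_derivative' \<phi>ci) auto
    then show ?thesis by (rule DERIV_continuous_on)
  qed
  have Kdiff: "K u - K v = integral {u..v} \<phi>" if "u \<le> v" "v \<le> B" for u v
    using Henstock_Kurzweil_Integration.integral_combine[OF that \<phi>int[of u B]] unfolding K_def by simp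
  have Kbnd: "2/(3*c)*(v-u) \<le> K u - K v \<and> K u - K v \<le> 2/c*(v-u)" if "u \<le> v" "v \<le> B" for u v
  proof -
    have "integral {u..v} (\<lambda>x. 2/(3*c)) \<le> integral {u..v} \<phi>"
      by (intro integral_le \<phi>int) (use \<phi>b in auto)
    moreover have "integral {u..v} \<phi> \<le> integral {u..v} (\<lambda>x. 2/c)"
      by (intro integral_le \<phi>int) (use \<phi>b in auto)
    ultimately show ?thesis using that Kdiff[OF that] by (simp add: content_real mult.commute)
  qed
  have KB: "K B = 0" unfolding K_def by simp
  have Kge: "K u \<ge> 0" if "u \<le> B" for u
  proof -
    have "0 \<le> 2/(3*c)*(B-u)" using that c by simp
    then show ?thesis using Kbnd[OF that order_refl] KB by linarith
  qed
  have Kinj: "u = v" if "u \<le> B" "v \<le> B" "K u = K v" for u v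
  proof (rule ccontr)
    assume "u \<noteq> v"
    then consider "u < v" | "v < u" by linarith
    then show False
    proof cases
      case 1
      have "0 < 2/(3*c)*(v-u)" using 1 c by simp
      then show False using Kbnd[of u v] that 1 by linarith
    next
      case 2
      have "0 < 2/(3*c)*(u-v)" using 2 c by simp
      then show False using Kbnd[of v u] that 2 by linarith
    qed
  qed
  have Ksurj: "\<exists>u. u \<le> B \<and> K u = s" if "s \<ge> 0" for s
  proof -
    define a where "a = B - s * (3*c/2)"
    have aB: "a \<le> B" using that c by (simp add: a_def)
    have "s \<le> K a" using Kbnd[OF aB order_refl] KB c by (simp add: a_def field_simps)
    from IVT2'[of K B s a, OF _ this aB Kcont] KB that show ?thesis by auto
  qed
  define L where "L s = (THE u. u \<le> B \<and> K u = s)" for s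
  have LK: "L s \<le> B \<and> K (L s) = s" if "s \<ge> 0" for s
  proof -
    have "\<exists>!u. u \<le> B \<and> K u = s" using Ksurj[OF that] Kinj by blast
    from theI'[OF this] show ?thesis by (simp add: L_def)
  qed
  have KL: "L (K u) = u" if "u \<le> B" for u
    using LK[OF Kge[OF that]] Kinj that by blast
  have Ls: "L s < B" if "s > 0" for s
  proof -
    have "L s \<le> B" "K (L s) = s" using LK that by auto
    then show ?thesis using KB that by (cases "L s = B") auto
  qed
  have Lc: "isCont L s" if "s > 0" for s
  proof -
    define d where "d = (B - L s)/2"
    have d: "d > 0" using Ls[OF that] by (simp add: d_def)
    have "isCont L (K (L s))"
    proof (rule isCont_inverse_function[where f=K and g=L and x="L s", OF d])
      have z: "z < B" if "\<bar>z - L s\<bar> \<le> d" for z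
        using that d Ls[OF \<open>s > 0\<close>] unfolding d_def by (auto simp: abs_if split: if_splits)
      show "L (K z) = z" if "\<bar>z - L s\<bar> \<le> d" for z using KL z[OF that] by simp
      show "isCont K z" if "\<bar>z - L s\<bar> \<le> d" for z using Kd[OF z[OF that]] by (rule DERIV_isCont)
    qed
    then show ?thesis using LK that by simp
  qed
  have Ld: "(L has_real_derivative inverse (- \<phi> (L s))) (at s)" if "s > 0" for s
  proof (rule DERIV_inverse_function[where a=0 and b="s+1"])
    show "(K has_real_derivative - \<phi> (L s)) (at (L s))" using Kd Ls that by blast
    show "- \<phi> (L s) \<noteq> 0" using \<phi>pos[of "L s"] by simp
    show "K (L y) = y" if "0 < y" "y < s+1" for y using LK that by simp
  qed (use that Lc in auto)
  define T0 where "T0 = K u0"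
  have T0: "T0 > 0"
  proof -
    have "0 < 2/(3*c)" using c by simp
    moreover have "2/(3*c) \<le> K u0" using Kbnd[of u0 B] KB by (simp add: B_def)
    ultimately show ?thesis unfolding T0_def by linarith
  qed
  define \<rho> where "\<rho> t = exp (L (T0 + t))" for t
  have Lu0: "L (T0 + t) \<le> u0" if "t \<ge> 0" for t
  proof (rule ccontr)
    assume "\<not> ?thesis"
    moreover have "L (T0 + t) \<le> B" "K (L (T0+t)) = T0 + t" using LK[of "T0+t"] T0 that by auto
    ultimately show False
    proof -
      assume a: "\<not> L (T0 + t) \<le> u0" "L (T0 + t) \<le> B" "K (L (T0 + t)) = T0 + t"
      have "0 < 2/(3*c)*(L (T0 + t) - u0)" using a c by simp
      then show False using Kbnd[of u0 "L (T0+t)"] a that unfolding T0_def by linarith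
    qed
  qed
  have Lup: "L (T0 + t) \<le> B - c*(T0+t)/2" if "t \<ge> 0" for t
  proof -
    have "L (T0 + t) \<le> B" "K (L (T0+t)) = T0 + t" using LK[of "T0+t"] T0 that by auto
    with Kbnd[of "L (T0+t)" B] KB c have "T0 + t \<le> 2/c*(B - L (T0+t))" by simp
    then show ?thesis using c by (simp add: field_simps)
  qed
  show ?thesis
  proof (intro exI conjI allI impI)
    show "\<rho> 0 = r0" using KL[of u0] r0 by (simp add: \<rho>_def T0_def B_def u0_def)
    fix t :: real assume t: "t \<ge> 0"
    show "0 < \<rho> t" by (simp add: \<rho>_def)
    show "\<rho> t \<le> r0" using Lu0[OF t] r0 by (simp add: \<rho>_def u0_def ln_ge_iff)
    have mn: "min (L (T0 + t)) u0 = L (T0+t)" using Lu0[OF t] by simp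
    have gp: "g (\<rho> t) > 0" using gb[of "\<rho> t"] \<open>\<rho> t \<le> r0\<close> by (simp add: \<rho>_def)
    have "(\<rho> has_real_derivative exp (L (T0 + t)) * (inverse (- \<phi> (L (T0 + t))) * (0 + 1))) (at t)"
      unfolding \<rho>_def
      by (intro DERIV_chain2[OF DERIV_exp] DERIV_chain2[OF Ld] derivative_intros) (use T0 t in auto)
    moreover have "exp (L (T0 + t)) * (inverse (- \<phi> (L (T0 + t))) * (0 + 1)) = - c * \<rho> t * g (\<rho> t)"
      using c gp by (simp add: \<phi>_def mn \<rho>_def field_simps)
    ultimately show "(\<rho> has_real_derivative (- c * \<rho> t * g (\<rho> t))) (at t)" by simp
  next
    have up: "((\<lambda>t. exp (B - c*(T0+t)/2)) \<longlongrightarrow> 0) at_top" using c by real_asymp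
    show "(\<rho> \<longlongrightarrow> 0) at_top"
    proof (rule tendsto_sandwich[OF _ _ tendsto_const up])
      show "\<forall>\<^sub>F t in at_top. 0 \<le> \<rho> t" by (simp add: \<rho>_def)
      show "\<forall>\<^sub>F t in at_top. \<rho> t \<le> exp (B - c*(T0+t)/2)"
        using eventually_ge_at_top[of 0] by eventually_elim (use Lup in \<open>auto simp: \<rho>_def\<close>)
    qed
  qed
qed




lemma vd_comp:
  fixes x :: "real \<Rightarrow> real \<times> real \<times> real"
  assumes "(x has_vector_derivative v) F"
  shows "((\<lambda>t. fst (x t)) has_real_derivative fst v) F"
    and "((\<lambda>t. fst (snd (x t))) has_real_derivative fst (snd v)) F"
    and "((\<lambda>t. snd (snd (x t))) has_real_derivative snd (snd v)) F"
proof -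
  show "((\<lambda>t. fst (x t)) has_real_derivative fst v) F"
    unfolding has_real_derivative_iff_has_vector_derivative
    using bounded_linear.has_vector_derivative[OF bounded_linear_fst assms] by simp
  show "((\<lambda>t. fst (snd (x t))) has_real_derivative fst (snd v)) F"
    unfolding has_real_derivative_iff_has_vector_derivative
    using bounded_linear.has_vector_derivative[OF bounded_linear_fst_comp[OF bounded_linear_snd] assms] by simp
  show "((\<lambda>t. snd (snd (x t))) has_real_derivative snd (snd v)) F"
    unfolding has_real_derivative_iff_has_vector_derivative
    using bounded_linear.has_vector_derivative[OF bounded_linear_snd_comp[OF bounded_linear_snd] assms] by simp
qed

lemma mono_deriv:
  fixes g g' :: "real \<Rightarrow> real"
  assumes ab: "a \<le> b"
    and d: "\<And>x. x \<in> {a..b} \<Longrightarrow> (g has_real_derivative g' x) (at x within {a..b})"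
    and nn: "\<And>x. x \<in> {a..b} \<Longrightarrow> g' x \<ge> 0"
  shows "g a \<le> g b"
proof -
  have c: "continuous_on {a..b} g"
    using DERIV_continuous_on[of "{a..b}" g g'] d by blast
  have e: "\<exists>y. (g has_real_derivative y) (at x) \<and> 0 \<le> y" if x: "a < x" "x < b" for x
  proof -
    have xi: "x \<in> {a..b}" using x by auto
    have eq: "at x within {a..b} = at x" using at_within_Icc_at[OF x] .
    have "(g has_real_derivative g' x) (at x)" using d[OF xi] unfolding eq .
    then show ?thesis using nn[OF xi] by blast
  qed
  show ?thesis using DERIV_nonneg_imp_increasing_open[OF ab e c] by blast
qed

lemma zero_persist:
  fixes p k :: "real \<Rightarrow> real"
  assumes I: "is_interval I" and d: "\<And>t. t \<in> I \<Longrightarrow> (p has_real_derivative p t * k t) (at t within I)"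
    and kc: "continuous_on I k" and t0: "t0 \<in> I" and t: "t \<in> I" and z: "p t0 = 0"
  shows "p t = 0"
proof -
  define a where "a = min t0 t"
  define b where "b = max t0 t"
  have abI: "{a..b} \<subseteq> I"
  proof
    fix x assume x: "x \<in> {a..b}"
    show "x \<in> I"
    proof (cases "t0 \<le> t")
      case True
      then show ?thesis using I[unfolded is_interval_1, rule_format, of t0 t x] t0 t x
        by (simp add: a_def b_def)
    next
      case False
      then show ?thesis using I[unfolded is_interval_1, rule_format, of t t0 x] t0 t x
        by (simp add: a_def b_def)
    qed
  qed
  have "bounded (k ` {a..b})"
    by (intro compact_imp_bounded compact_continuous_image continuous_on_subset[OF kc abI] compact_Icc)
  then obtain M where M: "M > 0" "\<And>x. x \<in> k ` {a..b} \<Longrightarrow> norm x \<le> M"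
    unfolding bounded_pos by blast
  have kM: "\<bar>k \<tau>\<bar> \<le> M" if "\<tau> \<in> {a..b}" for \<tau> using M(2)[of "k \<tau>"] that by auto
  show ?thesis
  proof (cases "t0 \<le> t")
    case True
    define w where "w \<tau> = - (p \<tau>^2 * exp (-2*M*\<tau>))" for \<tau>
    have "w t0 \<le> w t"
    proof (rule mono_deriv[OF True])
      fix \<tau> assume \<tau>: "\<tau> \<in> {t0..t}"
      have sub: "{t0..t} \<subseteq> I" using abI True by (auto simp: a_def b_def)
      have dp: "(p has_real_derivative p \<tau> * k \<tau>) (at \<tau> within {t0..t})"
        using DERIV_subset[OF d sub] \<tau> sub by auto
      show "(w has_real_derivative (2 * (p \<tau>)^2 * exp (-2*M*\<tau>) * (M - k \<tau>))) (at \<tau> within {t0..t})"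
        unfolding w_def
        by (auto intro!: derivative_eq_intros dp simp: algebra_simps power2_eq_square)
      have "\<tau> \<in> {a..b}" using \<tau> True by (auto simp: a_def b_def)
      then show "0 \<le> 2 * (p \<tau>)^2 * exp (-2*M*\<tau>) * (M - k \<tau>)" using kM[of \<tau>] by auto
    qed
    then have "p t^2 * exp (-2*M*t) \<le> 0" using z by (simp add: w_def)
    then show ?thesis by (simp add: mult_le_0_iff)
  next
    case False
    then have le: "t \<le> t0" by simp
    define w where "w \<tau> = p \<tau>^2 * exp (2*M*\<tau>)" for \<tau>
    have "w t \<le> w t0"
    proof (rule mono_deriv[OF le])
      fix \<tau> assume \<tau>: "\<tau> \<in> {t..t0}"
      have sub: "{t..t0} \<subseteq> I" using abI le by (auto simp: a_def b_def)
      have dp: "(p has_real_derivative p \<tau> * k \<tau>) (at \<tau> within {t..t0})"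
        using DERIV_subset[OF d sub] \<tau> sub by auto
      show "(w has_real_derivative (2 * (p \<tau>)^2 * exp (2*M*\<tau>) * (k \<tau> + M))) (at \<tau> within {t..t0})"
        unfolding w_def
        by (auto intro!: derivative_eq_intros dp simp: algebra_simps power2_eq_square)
      have "\<tau> \<in> {a..b}" using \<tau> le by (auto simp: a_def b_def)
      then show "0 \<le> 2 * (p \<tau>)^2 * exp (2*M*\<tau>) * (k \<tau> + M)" using kM[of \<tau>] by auto
    qed
    then have "p t^2 * exp (2*M*t) \<le> 0" using z by (simp add: w_def)
    then show ?thesis by (simp add: mult_le_0_iff)
  qed
qed



lemma vf_simps: "vf \<xi> \<alpha> h1 h2 h3 (s,y,r) =
  (s * (-2 + r * s + r^2) * (y - \<alpha>/\<xi>) * (1 + h1 (s,y,r)),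
   s + y*r * s*(y-\<alpha>/\<xi>)*(1 + h2 (s,y,r)),
   r * (2 - r * s) * (y - \<alpha>/\<xi>) * (1 + h3 (s,y,r)))"
  by (simp add: vf_def)

lemma small_h:
  fixes h :: "real \<times> real \<times> real \<Rightarrow> real"
  assumes "continuous_on UNIV h" "h P = 0"
  shows "\<exists>\<delta>>0. \<forall>p. dist p P < \<delta> \<longrightarrow> \<bar>h p\<bar> < 1/2"
proof -
  from assms(1) have "\<exists>\<delta>>0. \<forall>x'\<in>UNIV. dist x' P < \<delta> \<longrightarrow> dist (h x') (h P) < 1/2"
    unfolding continuous_on_iff by (meson UNIV_I zero_less_divide_1_iff zero_less_numeral)
  then show ?thesis using assms(2) by (simp add: dist_real_def)
qed

lemma box_dist:
  fixes s y r s0 y0 r0 e :: real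
  assumes "\<bar>s - s0\<bar> < e" "\<bar>y - y0\<bar> < e" "\<bar>r - r0\<bar> < e"
  shows "dist (s,y,r) (s0,y0,r0) < 3*e"
proof -
  have "dist (s,y,r) (s0,y0,r0) = norm (s - s0, y - y0, r - r0)" by (simp add: dist_norm)
  also have "\<dots> \<le> norm (s - s0) + norm (y - y0, r - r0)" by (rule norm_Pair_le)
  also have "\<dots> \<le> norm (s - s0) + (norm (y - y0) + norm (r - r0))" using norm_Pair_le[of "y - y0" "r - r0"] by simp
  finally show ?thesis using assms by simp
qed

lemma sign_aux:
  fixes s r h :: real
  assumes "\<bar>r\<bar> \<le> 1/2" "\<bar>s\<bar> \<le> 1/2" "\<bar>h\<bar> < 1/2"
  shows "-2 + r * s + r^2 < 0" "1 + h > 0"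
proof -
  have "\<bar>r\<bar> * \<bar>s\<bar> \<le> 1/2 * (1/2)" using assms by (intro mult_mono) auto
  moreover have "\<bar>r\<bar> * \<bar>r\<bar> \<le> 1/2 * (1/2)" using assms by (intro mult_mono) auto
  moreover have "r * s \<le> \<bar>r\<bar> * \<bar>s\<bar>" by (metis abs_ge_self abs_mult)
  moreover have "r^2 = \<bar>r\<bar> * \<bar>r\<bar>" by (simp add: power2_eq_square)
  ultimately show "-2 + r * s + r^2 < 0" by linarith
  show "1 + h > 0" using assms by linarith
qed

lemma sign_neg:
  fixes s r h B :: real
  assumes "s \<ge> 0" "\<bar>r\<bar> \<le> 1/2" "\<bar>s\<bar> \<le> 1/2" "\<bar>h\<bar> < 1/2" "B < 0"
  shows "s * (-2 + r * s + r^2) * B * (1 + h) \<ge> 0"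
proof -
  note a = sign_aux[OF assms(2,3,4)]
  have "(-2 + r * s + r^2) * B > 0" using a(1) assms(5) by (simp add: mult_neg_neg)
  then have "(-2 + r * s + r^2) * B * (1 + h) > 0" using a(2) by simp
  then have "s * ((-2 + r * s + r^2) * B * (1 + h)) \<ge> 0" using assms(1) by simp
  then show ?thesis by (simp add: mult.assoc)
qed

lemma sign_pos:
  fixes s r h B :: real
  assumes "s \<ge> 0" "\<bar>r\<bar> \<le> 1/2" "\<bar>s\<bar> \<le> 1/2" "\<bar>h\<bar> < 1/2" "B > 0"
  shows "s * (-2 + r * s + r^2) * B * (1 + h) \<le> 0"
proof -
  note a = sign_aux[OF assms(2,3,4)]
  have "(-2 + r * s + r^2) * B < 0" using a(1) assms(5) by (simp add: mult_neg_pos)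
  then have "(-2 + r * s + r^2) * B * (1 + h) < 0" using a(2) by (simp add: mult_neg_pos)
  then have "s * ((-2 + r * s + r^2) * B * (1 + h)) \<le> 0" using assms(1) by (simp add: mult_nonneg_nonpos)
  then show ?thesis by (simp add: mult.assoc)
qed



lemma stable_part:
  fixes \<xi> \<alpha> :: real and h1 h2 h3 :: "real \<times> real \<times> real \<Rightarrow> real"
  assumes \<xi>: "\<xi> > 0" and \<alpha>: "\<alpha> > 0"
    and c1: "continuous_on UNIV h1" and c2: "continuous_on UNIV h2" and c3: "continuous_on UNIV h3"
    and z1: "\<And>s y. h1 (s, y, 0) = 0" and z2: "\<And>s y. h2 (s, y, 0) = 0" and z3: "\<And>s y. h3 (s, y, 0) = 0"
  shows "\<exists>V. open V \<and> (0, 0, 0) \<in> V \<and>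
            stable_set (vf \<xi> \<alpha> h1 h2 h3) (V \<inter> Quad) (0, 0, 0) = {(0, 0, r) | r. r \<ge> 0} \<inter> V"
proof -
  define a where "a = \<alpha>/\<xi>"
  have a: "a > 0" using \<xi> \<alpha> by (simp add: a_def)
  define f where "f = vf \<xi> \<alpha> h1 h2 h3"
  define P :: "real \<times> real \<times> real" where "P = (0,0,0)"
  obtain d1 where d1: "d1 > 0" "\<And>p. dist p P < d1 \<Longrightarrow> \<bar>h1 p\<bar> < 1/2"
    using small_h[OF c1, of P] z1 unfolding P_def by auto
  obtain d2 where d2: "d2 > 0" "\<And>p. dist p P < d2 \<Longrightarrow> \<bar>h2 p\<bar> < 1/2"
    using small_h[OF c2, of P] z2 unfolding P_def by auto
  obtain d3 where d3: "d3 > 0" "\<And>p. dist p P < d3 \<Longrightarrow> \<bar>h3 p\<bar> < 1/2"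
    using small_h[OF c3, of P] z3 unfolding P_def by auto
  define e where "e = min (min (min d1 d2) d3 / 3) (min (a/2) (1/2))"
  have e: "e > 0" "e \<le> a/2" "e \<le> 1/2" "3*e \<le> d1" "3*e \<le> d2" "3*e \<le> d3"
    using d1 d2 d3 a unfolding e_def by auto
  define V :: "(real \<times> real \<times> real) set" where "V = {-e<..<e} \<times> {-e<..<e} \<times> {-e<..<e}"
  have Vo: "open V" unfolding V_def by (intro open_Times open_greaterThanLessThan)
  have inV: "(s,y,r) \<in> V \<longleftrightarrow> \<bar>s\<bar> < e \<and> \<bar>y\<bar> < e \<and> \<bar>r\<bar> < e" for s y r
    by (auto simp: V_def abs_less_iff)
  have hb: "\<bar>h1 (s,y,r)\<bar> < 1/2 \<and> \<bar>h2 (s,y,r)\<bar> < 1/2 \<and> \<bar>h3 (s,y,r)\<bar> < 1/2" if "(s,y,r) \<in> V" for s y r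
  proof -
    have "dist (s,y,r) P < 3*e" using box_dist[of s 0 e y 0 r 0] that inV unfolding P_def by simp
    then have "dist (s,y,r) P < d1" "dist (s,y,r) P < d2" "dist (s,y,r) P < d3" using e by linarith+
    then show ?thesis using d1 d2 d3 by blast
  qed
  have quad: "(s,y,r) \<in> Quad \<longleftrightarrow> s \<ge> 0 \<and> r \<ge> 0" for s y r by (simp add: Quad_def)
  have f0: "f (0,0,0) = 0" by (simp add: f_def vf_simps zero_prod_def)
  have "stable_set f (V \<inter> Quad) (0,0,0) = {(0,0,r) | r. r \<ge> 0} \<inter> V"
  proof (rule equalityI)
    show "stable_set f (V \<inter> Quad) (0,0,0) \<subseteq> {(0,0,r) | r. r \<ge> 0} \<inter> V"
    proof
      fix z assume "z \<in> stable_set f (V \<inter> Quad) (0,0,0)"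
      then obtain x where zU: "z \<in> V \<inter> Quad" and sol: "is_sol f x {0..}" and x0: "x 0 = z"
        and xU: "\<forall>t\<ge>0. x t \<in> V \<inter> Quad" and lim: "(x \<longlongrightarrow> (0,0,0)) at_top"
        unfolding stable_set_def by auto
      define S where "S t = fst (x t)" for t
      define Y where "Y t = fst (snd (x t))" for t
      define R where "R t = snd (snd (x t))" for t
      have xeq: "x t = (S t, Y t, R t)" for t by (simp add: S_def Y_def R_def)
      have dx: "(x has_vector_derivative f (x t)) (at t within {0..})" if "t \<ge> 0" for t
        using sol that unfolding is_sol_def by auto
      have fx: "f (x t) = (S t * (-2 + R t * S t + R t ^2) * (Y t - a) * (1 + h1 (x t)),
          S t + Y t * R t * S t * (Y t - a) * (1 + h2 (x t)),
          R t * (2 - R t * S t) * (Y t - a) * (1 + h3 (x t)))" for t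
        by (simp only: f_def xeq vf_simps a_def)
      have bnds: "\<bar>S t\<bar> < e \<and> \<bar>Y t\<bar> < e \<and> \<bar>R t\<bar> < e \<and> S t \<ge> 0 \<and> R t \<ge> 0 \<and>
          \<bar>h1 (x t)\<bar> < 1/2 \<and> \<bar>h2 (x t)\<bar> < 1/2 \<and> \<bar>h3 (x t)\<bar> < 1/2" if "t \<ge> 0" for t
      proof -
        have "(S t, Y t, R t) \<in> V" "(S t, Y t, R t) \<in> Quad" using xU that xeq[of t] by auto
        then show ?thesis using hb[of "S t" "Y t" "R t"] unfolding inV quad xeq[of t] by auto
      qed
      have dS: "(S has_real_derivative fst (f (x t))) (at t within {0..})" if "t \<ge> 0" for t
        using vd_comp(1)[OF dx[OF that]] unfolding S_def .
      have dY: "(Y has_real_derivative fst (snd (f (x t)))) (at t within {0..})" if "t \<ge> 0" for t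
        using vd_comp(2)[OF dx[OF that]] unfolding Y_def .
      have Snn: "fst (f (x t)) \<ge> 0" if "t \<ge> 0" for t
      proof -
        have "Y t - a < 0" using bnds[OF that] e by linarith
        then show ?thesis unfolding fx fst_conv
          by (intro sign_neg) (use bnds[OF that] e in auto)
      qed
      have Smono: "S u \<le> S v" if "0 \<le> u" "u \<le> v" for u v
      proof (rule mono_deriv[OF that(2)])
        fix \<tau> assume "\<tau> \<in> {u..v}"
        then have \<tau>: "\<tau> \<ge> 0" using that by auto
        show "(S has_real_derivative fst (f (x \<tau>))) (at \<tau> within {u..v})"
          by (rule DERIV_subset[OF dS[OF \<tau>]]) (use that in auto)
        show "fst (f (x \<tau>)) \<ge> 0" by (rule Snn[OF \<tau>])
      qed
      have Slim: "(S \<longlongrightarrow> 0) at_top" using tendsto_fst[OF lim] unfolding S_def by simp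
      have S0: "S t = 0" if "t \<ge> 0" for t
      proof -
        have "eventually (\<lambda>v. S t \<le> S v) at_top"
          using eventually_ge_at_top[of t] by eventually_elim (use Smono that in auto)
        then have "S t \<le> 0" using tendsto_lowerbound[OF Slim] by simp
        then show ?thesis using bnds[OF that] by linarith
      qed
      have Yd0: "fst (snd (f (x t))) = 0" if "t \<ge> 0" for t unfolding fx using S0[OF that] by simp
      have Yc: "Y t = Y 0" if "t \<ge> 0" for t
      proof -
        have "Y 0 \<le> Y t"
        proof (rule mono_deriv[OF that, of Y "\<lambda>_. 0"])
          fix \<tau> assume "\<tau> \<in> {0..t}"
          then have \<tau>: "\<tau> \<ge> 0" by auto
          show "(Y has_real_derivative 0) (at \<tau> within {0..t})"
            using DERIV_subset[OF dY[OF \<tau>], of "{0..t}"] Yd0[OF \<tau>] by auto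
        qed simp
        moreover have "- Y 0 \<le> - Y t"
        proof (rule mono_deriv[OF that, of "\<lambda>t. - Y t" "\<lambda>_. 0"])
          fix \<tau> assume "\<tau> \<in> {0..t}"
          then have \<tau>: "\<tau> \<ge> 0" by auto
          have "(Y has_real_derivative 0) (at \<tau> within {0..t})"
            using DERIV_subset[OF dY[OF \<tau>], of "{0..t}"] Yd0[OF \<tau>] by auto
          from DERIV_minus[OF this] show "((\<lambda>t. - Y t) has_real_derivative 0) (at \<tau> within {0..t})"
            by simp
        qed simp
        ultimately show ?thesis by linarith
      qed
      have Ylim: "(Y \<longlongrightarrow> 0) at_top" using tendsto_fst[OF tendsto_snd[OF lim]] unfolding Y_def by simp
      have ev: "eventually (\<lambda>v. Y v = Y 0) at_top"
        using eventually_ge_at_top[of 0] by eventually_elim (rule Yc)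
      have ev1: "eventually (\<lambda>v. Y 0 \<le> Y v) at_top" using ev by eventually_elim simp
      have ev2: "eventually (\<lambda>v. Y 0 \<ge> Y v) at_top" using ev by eventually_elim simp
      have "Y 0 \<le> 0" by (rule tendsto_lowerbound[OF Ylim ev1]) simp
      moreover have "Y 0 \<ge> 0" by (rule tendsto_upperbound[OF Ylim ev2]) simp
      ultimately have Y0: "Y 0 = 0" by simp
      have "z = (0, 0, R 0)" using x0 xeq[of 0] S0[of 0] Y0 by simp
      then show "z \<in> {(0,0,r) | r. r \<ge> 0} \<inter> V" using zU bnds[of 0] by auto
    qed
  next
    show "{(0,0,r) | r. r \<ge> 0} \<inter> V \<subseteq> stable_set f (V \<inter> Quad) (0,0,0)"
    proof
      fix z assume "z \<in> {(0,0,r) | r. r \<ge> 0} \<inter> V"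
      then obtain r0 where z: "z = (0,0,r0)" "r0 \<ge> 0" "z \<in> V" by auto
      have r0e: "r0 < e" using z inV by auto
      show "z \<in> stable_set f (V \<inter> Quad) (0,0,0)"
      proof (cases "r0 = 0")
        case True
        have "is_sol f (\<lambda>t. (0,0,0)) {0..}"
          unfolding is_sol_def using is_interval_ci f0 by (auto simp: zero_prod_def[symmetric])
        then show ?thesis unfolding stable_set_def using z True e
          by (auto intro!: exI[of _ "\<lambda>t. (0,0,0)"] simp: inV quad)
      next
        case False
        then have r0p: "r0 > 0" using z by simp
        define g where "g \<rho> = 1 + h3 (0,0,\<rho>)" for \<rho>
        have cP: "continuous_on {0<..r0} (\<lambda>\<rho>::real. (0::real, 0::real, \<rho>))"
          by (intro continuous_on_Pair continuous_on_const continuous_on_id)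
        have gc: "continuous_on {0<..r0} g" unfolding g_def
          by (rule continuous_on_add[OF continuous_on_const continuous_on_compose2[OF c3 cP subset_UNIV]])
        have gb: "1/2 \<le> g \<rho> \<and> g \<rho> \<le> 3/2" if "0 < \<rho>" "\<rho> \<le> r0" for \<rho>
        proof -
          have "(0,0,\<rho>) \<in> V" using that r0e e by (simp add: inV)
          then have "\<bar>h3 (0,0,\<rho>)\<bar> < 1/2" using hb by blast
          then show ?thesis unfolding g_def by linarith
        qed
        have ca: "2*a > 0" using a by simp
        obtain \<rho> where \<rho>0: "\<rho> 0 = r0" and \<rho>t: "\<forall>t\<ge>0. 0 < \<rho> t \<and> \<rho> t \<le> r0 \<and>
            (\<rho> has_real_derivative (- (2*a) * \<rho> t * g (\<rho> t))) (at t)" and \<rho>l: "(\<rho> \<longlongrightarrow> 0) at_top"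
          using scalar_ode[OF ca r0p gc gb] by blast
        define x where "x t = (0::real, 0::real, \<rho> t)" for t
        have fx: "f (x t) = (0, 0, - (2*a) * \<rho> t * g (\<rho> t))" for t
          by (simp add: f_def x_def vf_simps g_def a_def[symmetric] algebra_simps)
        have sol: "is_sol f x {0..}" unfolding is_sol_def
        proof (intro conjI ballI)
          show "is_interval {0::real..}" by (rule is_interval_ci)
          fix t :: real assume "t \<in> {0..}"
          then have d: "(\<rho> has_vector_derivative (- (2*a) * \<rho> t * g (\<rho> t))) (at t)"
            using \<rho>t by (simp add: has_real_derivative_iff_has_vector_derivative)
          have "(x has_vector_derivative (0, 0, - (2*a) * \<rho> t * g (\<rho> t))) (at t)"
            unfolding x_def by (intro has_vector_derivative_Pair has_vector_derivative_const d)
          then show "(x has_vector_derivative f (x t)) (at t within {0..})"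
            unfolding fx by (rule has_vector_derivative_at_within)
        qed
        have xU: "\<forall>t\<ge>0. x t \<in> V \<inter> Quad" using \<rho>t r0e e by (auto simp: x_def inV quad)
        have xl: "(x \<longlongrightarrow> (0,0,0)) at_top" unfolding x_def
          by (intro tendsto_Pair tendsto_const \<rho>l)
        show ?thesis unfolding stable_set_def using z xU sol xl \<rho>0
          by (auto intro!: exI[of _ x] simp: x_def)
      qed
    qed
  qed
  then show ?thesis using Vo e unfolding f_def by (intro exI[of _ V]) (auto simp: inV)
qed



lemma unstable_part:
  fixes \<xi> \<alpha> :: real and h1 h2 h3 :: "real \<times> real \<times> real \<Rightarrow> real"
  assumes \<xi>: "\<xi> > 0" and \<alpha>: "\<alpha> > 0"
    and c1: "continuous_on UNIV h1" and c2: "continuous_on UNIV h2" and c3: "continuous_on UNIV h3"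
    and z1: "\<And>s y. h1 (s, y, 0) = 0" and z2: "\<And>s y. h2 (s, y, 0) = 0" and z3: "\<And>s y. h3 (s, y, 0) = 0"
  shows "\<exists>V. open V \<and> (0, 2 * \<alpha> / \<xi>, 0) \<in> V \<and>
            unstable_set (vf \<xi> \<alpha> h1 h2 h3) (V \<inter> Quad) (0, 2 * \<alpha> / \<xi>, 0) = {(0, 2 * \<alpha> / \<xi>, r) | r. r \<ge> 0} \<inter> V"
proof -
  define a where "a = \<alpha>/\<xi>"
  have a: "a > 0" using \<xi> \<alpha> by (simp add: a_def)
  define A where "A = 2 * \<alpha> / \<xi>"
  have A2: "A = 2 * a" by (simp add: A_def a_def)
  define f where "f = vf \<xi> \<alpha> h1 h2 h3"
  define P :: "real \<times> real \<times> real" where "P = (0,A,0)"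
  obtain d1 where d1: "d1 > 0" "\<And>p. dist p P < d1 \<Longrightarrow> \<bar>h1 p\<bar> < 1/2"
    using small_h[OF c1, of P] z1 unfolding P_def by auto
  obtain d2 where d2: "d2 > 0" "\<And>p. dist p P < d2 \<Longrightarrow> \<bar>h2 p\<bar> < 1/2"
    using small_h[OF c2, of P] z2 unfolding P_def by auto
  obtain d3 where d3: "d3 > 0" "\<And>p. dist p P < d3 \<Longrightarrow> \<bar>h3 p\<bar> < 1/2"
    using small_h[OF c3, of P] z3 unfolding P_def by auto
  define e where "e = min (min (min d1 d2) d3 / 3) (min (a/2) (1/2))"
  have e: "e > 0" "e \<le> a/2" "e \<le> 1/2" "3*e \<le> d1" "3*e \<le> d2" "3*e \<le> d3"
    using d1 d2 d3 a unfolding e_def by auto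
  define V :: "(real \<times> real \<times> real) set" where "V = {-e<..<e} \<times> {A-e<..<A+e} \<times> {-e<..<e}"
  have Vo: "open V" unfolding V_def by (intro open_Times open_greaterThanLessThan)
  have inV: "(s,y,r) \<in> V \<longleftrightarrow> \<bar>s\<bar> < e \<and> \<bar>y - A\<bar> < e \<and> \<bar>r\<bar> < e" for s y r
    by (auto simp: V_def abs_less_iff)
  have hb: "\<bar>h1 (s,y,r)\<bar> < 1/2 \<and> \<bar>h2 (s,y,r)\<bar> < 1/2 \<and> \<bar>h3 (s,y,r)\<bar> < 1/2" if "(s,y,r) \<in> V" for s y r
  proof -
    have "dist (s,y,r) P < 3*e" using box_dist[of s 0 e y A r 0] that inV unfolding P_def by simp
    then have "dist (s,y,r) P < d1" "dist (s,y,r) P < d2" "dist (s,y,r) P < d3" using e by linarith+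
    then show ?thesis using d1 d2 d3 by blast
  qed
  have quad: "(s,y,r) \<in> Quad \<longleftrightarrow> s \<ge> 0 \<and> r \<ge> 0" for s y r by (simp add: Quad_def)
  have f0: "f (0,A,0) = 0" by (simp add: f_def vf_simps zero_prod_def)
  have "unstable_set f (V \<inter> Quad) (0,A,0) = {(0,A,r) | r. r \<ge> 0} \<inter> V"
  proof (rule equalityI)
    show "unstable_set f (V \<inter> Quad) (0,A,0) \<subseteq> {(0,A,r) | r. r \<ge> 0} \<inter> V"
    proof
      fix z assume "z \<in> unstable_set f (V \<inter> Quad) (0,A,0)"
      then obtain x where zU: "z \<in> V \<inter> Quad" and sol: "is_sol f x {..0}" and x0: "x 0 = z"
        and xU: "\<forall>t\<le>0. x t \<in> V \<inter> Quad" and lim: "(x \<longlongrightarrow> (0,A,0)) at_bot"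
        unfolding unstable_set_def by auto
      define S where "S t = fst (x t)" for t
      define Y where "Y t = fst (snd (x t))" for t
      define R where "R t = snd (snd (x t))" for t
      have xeq: "x t = (S t, Y t, R t)" for t by (simp add: S_def Y_def R_def)
      have dx: "(x has_vector_derivative f (x t)) (at t within {..0})" if "t \<le> 0" for t
        using sol that unfolding is_sol_def by auto
      have fx: "f (x t) = (S t * (-2 + R t * S t + R t ^2) * (Y t - a) * (1 + h1 (x t)),
          S t + Y t * R t * S t * (Y t - a) * (1 + h2 (x t)),
          R t * (2 - R t * S t) * (Y t - a) * (1 + h3 (x t)))" for t
        by (simp only: f_def xeq vf_simps a_def)
      have bnds: "\<bar>S t\<bar> < e \<and> \<bar>Y t - A\<bar> < e \<and> \<bar>R t\<bar> < e \<and> S t \<ge> 0 \<and> R t \<ge> 0 \<and>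
          \<bar>h1 (x t)\<bar> < 1/2 \<and> \<bar>h2 (x t)\<bar> < 1/2 \<and> \<bar>h3 (x t)\<bar> < 1/2" if "t \<le> 0" for t
      proof -
        have "(S t, Y t, R t) \<in> V" "(S t, Y t, R t) \<in> Quad" using xU that xeq[of t] by auto
        then show ?thesis using hb[of "S t" "Y t" "R t"] unfolding inV quad xeq[of t] by auto
      qed
      have dS: "(S has_real_derivative fst (f (x t))) (at t within {..0})" if "t \<le> 0" for t
        using vd_comp(1)[OF dx[OF that]] unfolding S_def .
      have dY: "(Y has_real_derivative fst (snd (f (x t)))) (at t within {..0})" if "t \<le> 0" for t
        using vd_comp(2)[OF dx[OF that]] unfolding Y_def .
      have Snp: "fst (f (x t)) \<le> 0" if "t \<le> 0" for t
      proof -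
        have "Y t - a > 0" using bnds[OF that] e A2 by (auto simp: abs_less_iff)
        then show ?thesis unfolding fx fst_conv
          by (intro sign_pos) (use bnds[OF that] e in auto)
      qed
      have Smono: "S v \<le> S u" if "u \<le> v" "v \<le> 0" for u v
      proof -
        have "- S u \<le> - S v"
        proof (rule mono_deriv[OF that(1), of "\<lambda>t. - S t" "\<lambda>t. - fst (f (x t))"])
          fix \<tau> assume "\<tau> \<in> {u..v}"
          then have \<tau>: "\<tau> \<le> 0" using that by auto
          have "(S has_real_derivative fst (f (x \<tau>))) (at \<tau> within {u..v})"
            by (rule DERIV_subset[OF dS[OF \<tau>]]) (use that in auto)
          from DERIV_minus[OF this] show "((\<lambda>t. - S t) has_real_derivative - fst (f (x \<tau>))) (at \<tau> within {u..v})" .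
          show "- fst (f (x \<tau>)) \<ge> 0" using Snp[OF \<tau>] by simp
        qed
        then show ?thesis by simp
      qed
      have Slim: "(S \<longlongrightarrow> 0) at_bot" using tendsto_fst[OF lim] unfolding S_def by simp
      have S0: "S t = 0" if "t \<le> 0" for t
      proof -
        have "eventually (\<lambda>u. S t \<le> S u) at_bot"
          using eventually_le_at_bot[of t] by eventually_elim (use Smono that in auto)
        then have "S t \<le> 0" using tendsto_lowerbound[OF Slim] by simp
        then show ?thesis using bnds[OF that] by linarith
      qed
      have Yd0: "fst (snd (f (x t))) = 0" if "t \<le> 0" for t unfolding fx using S0[OF that] by simp
      have Yc: "Y t = Y 0" if "t \<le> 0" for t
      proof -
        have "Y t \<le> Y 0"
        proof (rule mono_deriv[OF that, of Y "\<lambda>_. 0"])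
          fix \<tau> assume "\<tau> \<in> {t..0}"
          then have \<tau>: "\<tau> \<le> 0" by auto
          show "(Y has_real_derivative 0) (at \<tau> within {t..0})"
            using DERIV_subset[OF dY[OF \<tau>], of "{t..0}"] Yd0[OF \<tau>] by auto
        qed simp
        moreover have "- Y t \<le> - Y 0"
        proof (rule mono_deriv[OF that, of "\<lambda>t. - Y t" "\<lambda>_. 0"])
          fix \<tau> assume "\<tau> \<in> {t..0}"
          then have \<tau>: "\<tau> \<le> 0" by auto
          have "(Y has_real_derivative 0) (at \<tau> within {t..0})"
            using DERIV_subset[OF dY[OF \<tau>], of "{t..0}"] Yd0[OF \<tau>] by auto
          from DERIV_minus[OF this] show "((\<lambda>t. - Y t) has_real_derivative 0) (at \<tau> within {t..0})"
            by simp
        qed simp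
        ultimately show ?thesis by linarith
      qed
      have Ylim: "(Y \<longlongrightarrow> A) at_bot" using tendsto_fst[OF tendsto_snd[OF lim]] unfolding Y_def by simp
      have ev: "eventually (\<lambda>v. Y v = Y 0) at_bot"
        using eventually_le_at_bot[of 0] by eventually_elim (rule Yc)
      have ev1: "eventually (\<lambda>v. Y 0 \<le> Y v) at_bot" using ev by eventually_elim simp
      have ev2: "eventually (\<lambda>v. Y 0 \<ge> Y v) at_bot" using ev by eventually_elim simp
      have "Y 0 \<le> A" by (rule tendsto_lowerbound[OF Ylim ev1]) simp
      moreover have "Y 0 \<ge> A" by (rule tendsto_upperbound[OF Ylim ev2]) simp
      ultimately have Y0: "Y 0 = A" by simp
      have "z = (0, A, R 0)" using x0 xeq[of 0] S0[of 0] Y0 by simp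
      then show "z \<in> {(0,A,r) | r. r \<ge> 0} \<inter> V" using zU bnds[of 0] by auto
    qed
  next
    show "{(0,A,r) | r. r \<ge> 0} \<inter> V \<subseteq> unstable_set f (V \<inter> Quad) (0,A,0)"
    proof
      fix z assume "z \<in> {(0,A,r) | r. r \<ge> 0} \<inter> V"
      then obtain r0 where z: "z = (0,A,r0)" "r0 \<ge> 0" "z \<in> V" by auto
      have r0e: "r0 < e" using z inV by auto
      show "z \<in> unstable_set f (V \<inter> Quad) (0,A,0)"
      proof (cases "r0 = 0")
        case True
        have "is_sol f (\<lambda>t. (0,A,0)) {..0}"
          unfolding is_sol_def using is_interval_ic f0 by (auto simp: zero_prod_def[symmetric])
        then show ?thesis unfolding unstable_set_def using z True e
          by (auto intro!: exI[of _ "\<lambda>t. (0,A,0)"] simp: inV quad)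
      next
        case False
        then have r0p: "r0 > 0" using z by simp
        define g where "g \<rho> = 1 + h3 (0,A,\<rho>)" for \<rho>
        have cP: "continuous_on {0<..r0} (\<lambda>\<rho>::real. (0::real, A, \<rho>))"
          by (intro continuous_on_Pair continuous_on_const continuous_on_id)
        have gc: "continuous_on {0<..r0} g" unfolding g_def
          by (rule continuous_on_add[OF continuous_on_const continuous_on_compose2[OF c3 cP subset_UNIV]])
        have gb: "1/2 \<le> g \<rho> \<and> g \<rho> \<le> 3/2" if "0 < \<rho>" "\<rho> \<le> r0" for \<rho>
        proof -
          have "(0,A,\<rho>) \<in> V" using that r0e e by (simp add: inV)
          then have "\<bar>h3 (0,A,\<rho>)\<bar> < 1/2" using hb by blast
          then show ?thesis unfolding g_def by linarith
        qed
        have ca: "2*a > 0" using a by simp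
        obtain \<rho> where \<rho>0: "\<rho> 0 = r0" and \<rho>t: "\<forall>t\<ge>0. 0 < \<rho> t \<and> \<rho> t \<le> r0 \<and>
            (\<rho> has_real_derivative (- (2*a) * \<rho> t * g (\<rho> t))) (at t)" and \<rho>l: "(\<rho> \<longlongrightarrow> 0) at_top"
          using scalar_ode[OF ca r0p gc gb] by blast
        define x where "x t = (0::real, A, \<rho> (-t))" for t
        have fx: "f (x t) = (0, 0, (2*a) * \<rho> (-t) * g (\<rho> (-t)))" for t
          by (simp add: f_def x_def vf_simps g_def a_def[symmetric] A2 algebra_simps)
        have sol: "is_sol f x {..0}" unfolding is_sol_def
        proof (intro conjI ballI)
          show "is_interval {..0::real}" by (rule is_interval_ic)
          fix t :: real assume "t \<in> {..0}"
          then have "-t \<ge> 0" by simp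
          then have d0: "(\<rho> has_real_derivative (- (2*a) * \<rho> (-t) * g (\<rho> (-t)))) (at (-t))"
            using \<rho>t by blast
          have "((\<lambda>t. \<rho> (-t)) has_real_derivative (- (2*a) * \<rho> (-t) * g (\<rho> (-t))) * (-1)) (at t)"
          proof -
            have m: "((\<lambda>x::real. -x) has_real_derivative -1) (at t)"
              by (auto intro!: derivative_eq_intros)
            show ?thesis
            using DERIV_chain2[where f=\<rho> and g="\<lambda>x. -x" and x=t and Da="- (2*a) * \<rho> (-t) * g (\<rho> (-t))" and Db="-1" and s=UNIV] d0
m by simp
          qed
          then have d: "((\<lambda>t. \<rho> (-t)) has_vector_derivative ((2*a) * \<rho> (-t) * g (\<rho> (-t)))) (at t)"
            by (simp add: has_real_derivative_iff_has_vector_derivative)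
          have "(x has_vector_derivative (0, 0, (2*a) * \<rho> (-t) * g (\<rho> (-t)))) (at t)"
            unfolding x_def by (intro has_vector_derivative_Pair has_vector_derivative_const d)
          then show "(x has_vector_derivative f (x t)) (at t within {..0})"
            unfolding fx by (rule has_vector_derivative_at_within)
        qed
        have xU: "\<forall>t\<le>0. x t \<in> V \<inter> Quad"
        proof (intro allI impI)
          fix t :: real assume "t \<le> 0"
          then have "0 < \<rho> (-t) \<and> \<rho> (-t) \<le> r0" using \<rho>t by simp
          then show "x t \<in> V \<inter> Quad" using r0e e by (auto simp: x_def inV quad)
        qed
        have l2: "((\<lambda>t. \<rho> (-t)) \<longlongrightarrow> 0) at_bot"
          by (rule filterlim_compose[OF \<rho>l filterlim_uminus_at_top_at_bot])
        have xl: "(x \<longlongrightarrow> (0,A,0)) at_bot" unfolding x_def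
          by (intro tendsto_Pair tendsto_const l2)
        show ?thesis unfolding unstable_set_def using z xU sol xl \<rho>0
          by (auto intro!: exI[of _ x] simp: x_def)
      qed
    qed
  qed
  then show ?thesis using Vo e unfolding f_def A_def[symmetric] by (intro exI[of _ V]) (auto simp: inV)
qed



lemma inv_parts:
  fixes \<xi> \<alpha> :: real and h1 h2 h3 :: "real \<times> real \<times> real \<Rightarrow> real"
  assumes c1: "continuous_on UNIV h1" and c3: "continuous_on UNIV h3"
  shows "invariant_in (vf \<xi> \<alpha> h1 h2 h3) Quad {(s, y, r). r = 0}"
    and "invariant_in (vf \<xi> \<alpha> h1 h2 h3) Quad {(s, y, r). s = 0}"
proof -
  define f where "f = vf \<xi> \<alpha> h1 h2 h3"
  define a where "a = \<alpha>/\<xi>"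
  {
    fix x :: "real \<Rightarrow> real \<times> real \<times> real" and I t0 t
    assume sol: "is_sol f x I" and t0: "t0 \<in> I" and t: "t \<in> I"
    define S where "S t = fst (x t)" for t
    define Y where "Y t = fst (snd (x t))" for t
    define R where "R t = snd (snd (x t))" for t
    have xeq: "x t = (S t, Y t, R t)" for t by (simp add: S_def Y_def R_def)
    have I: "is_interval I" using sol unfolding is_sol_def by auto
    have dx: "(x has_vector_derivative f (x \<tau>)) (at \<tau> within I)" if "\<tau> \<in> I" for \<tau>
      using sol that unfolding is_sol_def by auto
    have xc: "continuous_on I x" unfolding continuous_on_eq_continuous_within
      using dx has_vector_derivative_continuous by blast
    have cS: "continuous_on I S" unfolding S_def by (rule continuous_on_fst[OF xc])
    have cY: "continuous_on I Y" unfolding Y_def by (rule continuous_on_fst[OF continuous_on_snd[OF xc]])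
    have cR: "continuous_on I R" unfolding R_def by (rule continuous_on_snd[OF continuous_on_snd[OF xc]])
    have ch1: "continuous_on I (\<lambda>\<tau>. h1 (x \<tau>))" by (rule continuous_on_compose2[OF c1 xc subset_UNIV])
    have ch3: "continuous_on I (\<lambda>\<tau>. h3 (x \<tau>))" by (rule continuous_on_compose2[OF c3 xc subset_UNIV])
    have fx: "f (x t) = (S t * (-2 + R t * S t + R t ^2) * (Y t - a) * (1 + h1 (x t)),
          S t + Y t * R t * S t * (Y t - a) * (1 + h2 (x t)),
          R t * (2 - R t * S t) * (Y t - a) * (1 + h3 (x t)))" for t
      by (simp only: f_def xeq vf_simps a_def)
    have "R t0 = 0 \<Longrightarrow> R t = 0"
    proof (rule zero_persist[OF I _ _ t0 t, where k="\<lambda>\<tau>. (2 - R \<tau> * S \<tau>) * (Y \<tau> - a) * (1 + h3 (x \<tau>))"])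
      show "continuous_on I (\<lambda>\<tau>. (2 - R \<tau> * S \<tau>) * (Y \<tau> - a) * (1 + h3 (x \<tau>)))"
        by (intro continuous_on_mult continuous_on_diff continuous_on_add continuous_on_const cS cY cR ch3)
      fix \<tau> assume "\<tau> \<in> I"
      from vd_comp(3)[OF dx[OF this]]
      show "(R has_real_derivative R \<tau> * ((2 - R \<tau> * S \<tau>) * (Y \<tau> - a) * (1 + h3 (x \<tau>)))) (at \<tau> within I)"
        unfolding R_def[symmetric] fx by (simp add: mult.assoc)
    qed
    moreover have "S t0 = 0 \<Longrightarrow> S t = 0"
    proof (rule zero_persist[OF I _ _ t0 t, where k="\<lambda>\<tau>. (-2 + R \<tau> * S \<tau> + R \<tau>^2) * (Y \<tau> - a) * (1 + h1 (x \<tau>))"])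
      show "continuous_on I (\<lambda>\<tau>. (-2 + R \<tau> * S \<tau> + R \<tau>^2) * (Y \<tau> - a) * (1 + h1 (x \<tau>)))"
        by (intro continuous_on_mult continuous_on_diff continuous_on_add continuous_on_const
            continuous_on_power cS cY cR ch1)
      fix \<tau> assume "\<tau> \<in> I"
      from vd_comp(1)[OF dx[OF this]]
      show "(S has_real_derivative S \<tau> * ((-2 + R \<tau> * S \<tau> + R \<tau>^2) * (Y \<tau> - a) * (1 + h1 (x \<tau>)))) (at \<tau> within I)"
        unfolding S_def[symmetric] fx by (simp add: mult.assoc)
    qed
    ultimately have "(snd (snd (x t0)) = 0 \<longrightarrow> snd (snd (x t)) = 0) \<and> (fst (x t0) = 0 \<longrightarrow> fst (x t) = 0)"
      unfolding S_def R_def by blast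
  } note key = this
  have mem1: "p \<in> {(s, y, r). r = 0} \<longleftrightarrow> snd (snd p) = 0" for p :: "real \<times> real \<times> real"
    by (cases p) auto
  have mem2: "p \<in> {(s, y, r). s = 0} \<longleftrightarrow> fst p = 0" for p :: "real \<times> real \<times> real"
    by (cases p) auto
  show "invariant_in (vf \<xi> \<alpha> h1 h2 h3) Quad {(s, y, r). r = 0}"
    unfolding invariant_in_def f_def[symmetric] mem1 using key by blast
  show "invariant_in (vf \<xi> \<alpha> h1 h2 h3) Quad {(s, y, r). s = 0}"
    unfolding invariant_in_def f_def[symmetric] mem2 using key by blast
qed

lemma hetero:
  fixes \<xi> \<alpha> :: real and h1 h2 h3 :: "real \<times> real \<times> real \<Rightarrow> real"
  assumes \<xi>: "\<xi> > 0" and \<alpha>: "\<alpha> > 0" and z1: "\<And>s y. h1 (s, y, 0) = 0"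
  shows "\<exists>x. is_sol (vf \<xi> \<alpha> h1 h2 h3) x UNIV
            \<and> range x = {(2 * \<alpha> / \<xi> * y - y^2, y, 0) | y. 0 < y \<and> y < 2 * \<alpha> / \<xi>}
            \<and> (x \<longlongrightarrow> (0, 0, 0)) at_bot
            \<and> (x \<longlongrightarrow> (0, 2 * \<alpha> / \<xi>, 0)) at_top"
proof -
  define A where "A = 2 * \<alpha> / \<xi>"
  have A: "A > 0" using \<alpha> \<xi> by (simp add: A_def)
  define y where "y t = A / (1 + exp (- A * t))" for t
  define x where "x t = (A * y t - (y t)^2, y t, 0::real)" for t
  have dy: "(y has_real_derivative A * y t - (y t)^2) (at t)" for t
  proof -
    have pos: "1 + exp (- A * t) \<noteq> 0" by (smt (verit) exp_gt_zero)
    have e: "((\<lambda>t. - A * t) has_real_derivative -A) (at t)" by (auto intro!: derivative_eq_intros)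
    have ge: "((\<lambda>t. exp (- A * t)) has_real_derivative exp (- A * t) * (-A)) (at t)"
      by (rule DERIV_fun_exp[OF e])
    have gd: "((\<lambda>t. 1 + exp (- A * t)) has_real_derivative exp (- A * t) * (-A)) (at t)"
      using DERIV_add[OF DERIV_const ge] by simp
    have dv: "((\<lambda>t. A / (1 + exp (- A * t))) has_real_derivative
        (0 * (1 + exp (- A * t)) - A * (exp (- A * t) * (-A))) / ((1 + exp (- A * t)) * (1 + exp (- A * t)))) (at t)"
      by (rule DERIV_divide[OF DERIV_const gd pos])
    have alg: "(0 * (1 + E) - A * (E * (-A))) / ((1 + E) * (1 + E)) = A * (A / (1 + E)) - (A / (1 + E))^2"
      if "1 + E \<noteq> 0" for E :: real
      using that by (simp add: power_divide diff_divide_distrib[symmetric] divide_simps) (simp add: algebra_simps power2_eq_square)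
    show ?thesis unfolding y_def
      by (rule DERIV_cong[OF dv]) (rule alg[OF pos])
  qed
  have dx: "(x has_vector_derivative ((A - 2 * y t) * (A * y t - (y t)^2), A * y t - (y t)^2, 0)) (at t)" for t
  proof -
    have d0: "((\<lambda>t. A * y t - (y t)^2) has_real_derivative A * (A * y t - (y t)^2) - of_nat 2 * ((A * y t - (y t)^2) * y t ^ (2 - Suc 0))) (at t)"
      by (rule DERIV_diff[OF DERIV_cmult[OF dy] DERIV_power[OF dy]])
    have d1: "((\<lambda>t. A * y t - (y t)^2) has_real_derivative (A - 2 * y t) * (A * y t - (y t)^2)) (at t)"
      by (rule DERIV_cong[OF d0]) (simp add: algebra_simps)
    show ?thesis unfolding x_def
      by (intro has_vector_derivative_Pair has_vector_derivative_const
          d1[unfolded has_real_derivative_iff_has_vector_derivative]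
          dy[unfolded has_real_derivative_iff_has_vector_derivative])
  qed
  have fx: "vf \<xi> \<alpha> h1 h2 h3 (x t) = ((A - 2 * y t) * (A * y t - (y t)^2), A * y t - (y t)^2, 0)" for t
    using \<xi> by (simp add: x_def vf_simps z1 A_def field_simps)
  have sol: "is_sol (vf \<xi> \<alpha> h1 h2 h3) x UNIV"
    unfolding is_sol_def using dx fx by simp
  have ybnd: "0 < y t \<and> y t < A" for t
  proof -
    have E: "exp (- A * t) > 0" by simp
    have g: "0 < A/(1+E) \<and> A/(1+E) < A" if "0 < E" for E :: real
    proof -
      have "0 < 1 + E" using that by simp
      then show ?thesis using A that by (simp add: divide_less_eq)
    qed
    show ?thesis unfolding y_def by (rule g[OF E])
  qed
  have rng: "range x = {(A * w - w^2, w, 0::real) | w. 0 < w \<and> w < A}"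
  proof (rule set_eqI iffI)+
    fix p assume "p \<in> range x"
    then obtain t where "p = x t" by auto
    then show "p \<in> {(A * w - w^2, w, 0::real) | w. 0 < w \<and> w < A}" using ybnd[of t] by (auto simp: x_def)
  next
    fix p assume "p \<in> {(A * w - w^2, w, 0::real) | w. 0 < w \<and> w < A}"
    then obtain w where w: "p = (A * w - w^2, w, 0)" "0 < w" "w < A" by auto
    define t where "t = - ln (A / w - 1) / A"
    have q: "A / w - 1 > 0" using w by (simp add: field_simps)
    have "exp (- A * t) = A / w - 1" using A q by (simp add: t_def)
    then have "y t = w" using w by (simp add: y_def)
    then have "x t = p" using w by (simp add: x_def)
    then show "p \<in> range x" by (metis rangeI)
  qed
  have ytop: "(y \<longlongrightarrow> A) at_top" unfolding y_def using A by real_asymp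
  have ybot: "(y \<longlongrightarrow> 0) at_bot" unfolding y_def using A by real_asymp
  have "(x \<longlongrightarrow> (A * A - A^2, A, 0)) at_top" unfolding x_def
    by (intro tendsto_intros ytop)
  then have xtop: "(x \<longlongrightarrow> (0, A, 0)) at_top" by (simp add: power2_eq_square)
  have "(x \<longlongrightarrow> (A * 0 - 0^2, 0, 0)) at_bot" unfolding x_def
    by (intro tendsto_intros ybot)
  then have xbot: "(x \<longlongrightarrow> (0, 0, 0)) at_bot" by simp
  show ?thesis using sol rng xtop xbot unfolding A_def by blast
qed


theorem lemma5:
  fixes \<xi> \<alpha> :: real and h1 h2 h3 :: "real \<times> real \<times> real \<Rightarrow> real"
  assumes "\<xi> > 0" and "\<alpha> > 0"
    and "smooth_fun h1" and "smooth_fun h2" and "smooth_fun h3"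
    and "\<And>s y. h1 (s, y, 0) = 0" and "\<And>s y. h2 (s, y, 0) = 0" and "\<And>s y. h3 (s, y, 0) = 0"
  defines "f \<equiv> vf \<xi> \<alpha> h1 h2 h3"
  shows "invariant_in f Quad {(s, y, r). r = 0}
       \<and> invariant_in f Quad {(s, y, r). s = 0}
       \<and> (\<forall>y. f (0, y, 0) = 0)
       \<and> (\<exists>V. open V \<and> (0, 0, 0) \<in> V \<and>
            stable_set f (V \<inter> Quad) (0, 0, 0) = {(0, 0, r) | r. r \<ge> 0} \<inter> V)
       \<and> (\<exists>x. is_sol f x UNIV
            \<and> range x = {(2 * \<alpha> / \<xi> * y - y^2, y, 0) | y. 0 < y \<and> y < 2 * \<alpha> / \<xi>}
            \<and> (x \<longlongrightarrow> (0, 0, 0)) at_bot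
            \<and> (x \<longlongrightarrow> (0, 2 * \<alpha> / \<xi>, 0)) at_top)
       \<and> (\<exists>V. open V \<and> (0, 2 * \<alpha> / \<xi>, 0) \<in> V \<and>
            unstable_set f (V \<inter> Quad) (0, 2 * \<alpha> / \<xi>, 0) = {(0, 2 * \<alpha> / \<xi>, r) | r. r \<ge> 0} \<inter> V)"
proof -
  have c1: "continuous_on UNIV h1" using assms(3) by (metis Ck.simps(1) smooth_fun_def)
  have c2: "continuous_on UNIV h2" using assms(4) by (metis Ck.simps(1) smooth_fun_def)
  have c3: "continuous_on UNIV h3" using assms(5) by (metis Ck.simps(1) smooth_fun_def)
  have fz: "\<forall>y. f (0, y, 0) = 0" by (simp add: f_def vf_simps zero_prod_def)
  have het: "\<exists>x. is_sol (vf \<xi> \<alpha> h1 h2 h3) x UNIV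
            \<and> range x = {(2 * \<alpha> / \<xi> * y - y^2, y, 0) | y. 0 < y \<and> y < 2 * \<alpha> / \<xi>}
            \<and> (x \<longlongrightarrow> (0, 0, 0)) at_bot
            \<and> (x \<longlongrightarrow> (0, 2 * \<alpha> / \<xi>, 0)) at_top"
    by (rule hetero) (use assms in auto)
  show ?thesis
    unfolding f_def
    using inv_parts[OF c1 c3, of \<xi> \<alpha> h2] fz[unfolded f_def]
      stable_part[OF assms(1,2) c1 c2 c3 assms(6,7,8)]
      het
      unstable_part[OF assms(1,2) c1 c2 c3 assms(6,7,8)]
    by blast
qed

end
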